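(* Let $c>0$ be a constant and consider the space of variables $(\rho,v,p,e,dt,dx)$, where $dt,dx$ are treated as independent variables (differentials), with $|v|<c$. Put $S=\dfrac{e+p}{c^{2}-v^{2}}$. For a real parameter $\epsilon$ (for which all expressions below are defined, in particular $\epsilon p+1\neq 0$, $\epsilon(p+Sv^{2})+1\neq 0$, $(\epsilon p+1)^2>v^2/c^2$) define the transformation $T_\epsilon:(\rho,v,p,e,dt,dx)\mapsto(\rho^{*},v^{*},p^{*},e^{*},dt^{*},dx^{*})$ by \[ \rho^{*}=\frac{\rho\sqrt{(\epsilon p+1)^{2}-v^{2}/c^{2}}}{\left(\epsilon(p+Sv^{2})+1\right)\sqrt{1-v^{2}/c^{2}}},\qquad v^{*}=\frac{v}{\epsilon p+1},\qquad p^{*}=\frac{p}{\epsilon p+1}, \] \[ e^{*}=\frac{S\left(c^{2}(\epsilon p+1)^{2}-v^{2}\right)}{\left(\epsilon(p+Sv^{2})+1\right)(\epsilon p+1)}-\frac{p}{\epsilon p+1}, \] \[ dt^{*}=-\epsilon\left(Sv\,dx-(p+Sv^{2})\,dt\right)+dt,\qquad dx^{*}=dx . \] (This is the subclass, with $a_1=-\epsilon^{-1}$, $a_2=a_4=\epsilon^{-1}$, $a_3=1$, of reciprocal transformations leaving invariant the 1+1-dimensional relativistic gasdynamic system $\partial_t\big(\rho c/\sqrt{c^2-v^2}\big)+\partial_x\big(\rho c v/\sqrt{c^2-v^2}\big)=0$, $\partial_t\big((e+p)v/(c^2-v^2)\big)+\partial_x\big((e+p)v^2/(c^2-v^2)+p\big)=0$.)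 Then the family $\{T_\epsilon\}$ is a one-parameter Lie group of transformations ($T_{\epsilon_1}\circ T_{\epsilon_2}=T_{\epsilon_1+\epsilon_2}$ where defined, $T_0=\mathrm{id}$), and, writing $S^{*}=(e^{*}+p^{*})/(c^{2}-v^{*2})$, the transformed quantities satisfy the Cauchy problem \[ \frac{d\rho^{*}}{d\epsilon}=-\frac{\rho^{*}v^{*2}e^{*}}{c^{2}-v^{*2}},\quad \frac{dv^{*}}{d\epsilon}=-p^{*}v^{*},\quad \frac{dp^{*}}{d\epsilon}=-p^{*2},\quad \frac{de^{*}}{d\epsilon}=\frac{c^{2}p^{*2}-v^{*2}e^{*2}}{c^{2}-v^{*2}}, \] \[ \frac{d(dt^{*})}{d\epsilon}=(p^{*}+S^{*}v^{*2})\,dt^{*}-S^{*}v^{*}\,dx^{*},\qquad \frac{d(dx^{*})}{d\epsilon}=0, \] with initial data $\rho^{*}=\rho,\ v^{*}=v,\ p^{*}=p,\ e^{*}=e,\ dt^{*}=dt,\ dx^{*}=dx$ at $\epsilon=0$. Equivalently, the group has infinitesimal generator \[ X=-\frac{\rho v^{2}e}{c^{2}-v^{2}}\partial_{\rho}-pv\,\partial_{v}-p^{2}\partial_{p}+\frac{c^{2}p^{2}-e^{2}v^{2}}{c^{2}-v^{2}}\partial_{e}+\frac{(c^{2}p+ev^{2})\,dt-v(e+p)\,dx}{c^{2}-v^{2}}\,\partial_{dt}. \]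
   Context: $c$ denotes the speed of light; $\rho$ is density, $v$ velocity, $p$ pressure, $e$ energy density. The differentials $dt,dx$ are regarded as additional coordinates on which the transformations act. A one-parameter Lie group of transformations is a family $T_\epsilon$ with $T_0$ the identity and $T_{\epsilon_1}\circ T_{\epsilon_2}=T_{\epsilon_1+\epsilon_2}$; its infinitesimal generator is the vector field of $\epsilon$-derivatives at $\epsilon=0$. *)

theory Defs
  imports "HOL-Analysis.Analysis"
begin

text \<open>States are tuples (rho, v, p, e, dt, dx) of reals; dt and dx are the differentials,
  treated as independent coordinates.\<close>
type_synonym state = "real \<times> real \<times> real \<times> real \<times> real \<times> real"

definition Sfun :: "real \<Rightarrow> real \<Rightarrow> real \<Rightarrow> real \<Rightarrow> real" where
  "Sfun c v p e = (e + p) / (c\<^sup>2 - v\<^sup>2)"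

definition admissible :: "real \<Rightarrow> state \<Rightarrow> bool" where
  "admissible c = (\<lambda>(\<rho>, v, p, e, dt, dx). \<bar>v\<bar> < c)"

definition T_defined :: "real \<Rightarrow> real \<Rightarrow> state \<Rightarrow> bool" where
  "T_defined c \<epsilon> = (\<lambda>(\<rho>, v, p, e, dt, dx).
     \<epsilon> * p + 1 \<noteq> 0 \<and> \<epsilon> * (p + Sfun c v p e * v\<^sup>2) + 1 \<noteq> 0 \<and>
     (\<epsilon> * p + 1)\<^sup>2 > v\<^sup>2 / c\<^sup>2)"

definition T :: "real \<Rightarrow> real \<Rightarrow> state \<Rightarrow> state" where
  "T c \<epsilon> = (\<lambda>(\<rho>, v, p, e, dt, dx).
     let S = Sfun c v p e in
     (\<rho> * sqrt ((\<epsilon> * p + 1)\<^sup>2 - v\<^sup>2 / c\<^sup>2)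
        / ((\<epsilon> * (p + S * v\<^sup>2) + 1) * sqrt (1 - v\<^sup>2 / c\<^sup>2)),
      v / (\<epsilon> * p + 1),
      p / (\<epsilon> * p + 1),
      S * (c\<^sup>2 * (\<epsilon> * p + 1)\<^sup>2 - v\<^sup>2) / ((\<epsilon> * (p + S * v\<^sup>2) + 1) * (\<epsilon> * p + 1))
        - p / (\<epsilon> * p + 1),
      - \<epsilon> * (S * v * dx - (p + S * v\<^sup>2) * dt) + dt,
      dx))"

text \<open>Right-hand side of the Cauchy problem, evaluated at the transformed state
  (rho*, v*, p*, e*, dt*, dx*), with S* = (e*+p*)/(c^2 - v*^2).\<close>
definition ode_rhs :: "real \<Rightarrow> state \<Rightarrow> state" where
  "ode_rhs c = (\<lambda>(\<rho>, v, p, e, dt, dx).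
     let S = (e + p) / (c\<^sup>2 - v\<^sup>2) in
     (- \<rho> * v\<^sup>2 * e / (c\<^sup>2 - v\<^sup>2),
      - p * v,
      - p\<^sup>2,
      (c\<^sup>2 * p\<^sup>2 - v\<^sup>2 * e\<^sup>2) / (c\<^sup>2 - v\<^sup>2),
      (p + S * v\<^sup>2) * dt - S * v * dx,
      0))"

definition generator :: "real \<Rightarrow> state \<Rightarrow> state" where
  "generator c = (\<lambda>(\<rho>, v, p, e, dt, dx).
     (- \<rho> * v\<^sup>2 * e / (c\<^sup>2 - v\<^sup>2),
      - p * v,
      - p\<^sup>2,
      (c\<^sup>2 * p\<^sup>2 - e\<^sup>2 * v\<^sup>2) / (c\<^sup>2 - v\<^sup>2),
      ((c\<^sup>2 * p + e * v\<^sup>2) * dt - v * (e + p) * dx) / (c\<^sup>2 - v\<^sup>2),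
      0))"

end

theory Submission
  imports Defs
begin

lemma T_eq: "T c \<epsilon> (r,v,p,e,dt,dx) =
  (r * sqrt ((\<epsilon> * p + 1)\<^sup>2 - v\<^sup>2 / c\<^sup>2)
        / ((\<epsilon> * (p + Sfun c v p e * v\<^sup>2) + 1) * sqrt (1 - v\<^sup>2 / c\<^sup>2)),
      v / (\<epsilon> * p + 1),
      p / (\<epsilon> * p + 1),
      Sfun c v p e * (c\<^sup>2 * (\<epsilon> * p + 1)\<^sup>2 - v\<^sup>2) / ((\<epsilon> * (p + Sfun c v p e * v\<^sup>2) + 1) * (\<epsilon> * p + 1))
        - p / (\<epsilon> * p + 1),
      - \<epsilon> * (Sfun c v p e * v * dx - (p + Sfun c v p e * v\<^sup>2) * dt) + dt,
      dx)"
  by (simp add: T_def Let_def)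



lemma deriv_comps:
  fixes c r v p S dt dx \<epsilon> :: real
  defines "q \<equiv> p + S * v\<^sup>2"
  defines "a \<equiv> \<epsilon>*p+1" and "B \<equiv> \<epsilon>*q+1"
  defines "D \<equiv> (\<epsilon> * p + 1)\<^sup>2 - v\<^sup>2 / c\<^sup>2" and "K \<equiv> sqrt (1 - v\<^sup>2 / c\<^sup>2)"
  defines "vs \<equiv> v/a" and "ps \<equiv> p/a" and "es \<equiv> S*(c\<^sup>2*a\<^sup>2-v\<^sup>2)/(B*a) - p/a"
    and "rs \<equiv> r * sqrt D / (B*K)" and "dts \<equiv> - \<epsilon> * (S * v * dx - q * dt) + dt"
  assumes c: "c > 0" and vc: "v\<^sup>2 < c\<^sup>2" and B: "B \<noteq> 0" and a: "a \<noteq> 0"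
    and Dp: "D > 0"
  shows "((\<lambda>\<eta>. r * sqrt ((\<eta> * p + 1)\<^sup>2 - v\<^sup>2 / c\<^sup>2)
        / ((\<eta> * q + 1) * K)) has_real_derivative - rs * vs\<^sup>2 * es/(c\<^sup>2 - vs\<^sup>2)) (at \<epsilon>)"
   and "((\<lambda>\<eta>. v/(\<eta>*p+1)) has_real_derivative - ps * vs) (at \<epsilon>)"
   and "((\<lambda>\<eta>. p/(\<eta>*p+1)) has_real_derivative - ps\<^sup>2) (at \<epsilon>)"
   and "((\<lambda>\<eta>. S*(c\<^sup>2*(\<eta>*p+1)\<^sup>2-v\<^sup>2)/((\<eta>*q+1)*(\<eta>*p+1)) - p/(\<eta>*p+1)) has_real_derivative
           (c\<^sup>2 * ps\<^sup>2 - vs\<^sup>2 * es\<^sup>2) / (c\<^sup>2 - vs\<^sup>2)) (at \<epsilon>)"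
   and "((\<lambda>\<eta>. - \<eta> * (S * v * dx - q * dt) + dt) has_real_derivative
           (ps + (es + ps) / (c\<^sup>2 - vs\<^sup>2) * vs\<^sup>2) * dts - (es + ps) / (c\<^sup>2 - vs\<^sup>2) * vs * dx) (at \<epsilon>)"
proof -
  have Kpos: "K > 0" using vc c by (simp add: K_def field_simps)
  have cD: "c\<^sup>2*a\<^sup>2-v\<^sup>2 = c\<^sup>2 * D" using c by (simp add: D_def a_def field_simps)
  have cvs: "c\<^sup>2 - vs\<^sup>2 = c\<^sup>2 * D / a\<^sup>2" using a c unfolding vs_def D_def a_def by (simp add: field_simps)
  have esps: "es + ps = S * c\<^sup>2 * D / (B*a)" unfolding es_def ps_def cD by simp
  have Ss: "(es + ps) / (c\<^sup>2 - vs\<^sup>2) = S * a / B"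
    unfolding esps cvs using a B c Dp by (simp add: field_simps power2_eq_square)
  have sD: "sqrt D * sqrt D = D" using Dp by simp
  have c2: "c\<^sup>2 > 0" using c by simp
  have nz1: "(\<epsilon> * q + 1) * (\<epsilon> * p + 1) \<noteq> 0" "\<epsilon> * p + 1 \<noteq> 0" "\<epsilon> * q + 1 \<noteq> 0"
    using a B by (auto simp: a_def B_def)
  have nz2: "(\<epsilon> * p + 1) * (\<epsilon> * q + 1) \<noteq> 0" using nz1 by simp
  have es2: "es = (S * c\<^sup>2 * D - p * B) / (B * a)"
  proof -
    have "es = S * c\<^sup>2 * D / (B * a) - p / a" using esps unfolding ps_def by (simp add: eq_diff_eq)
    then show ?thesis using a B by (simp add: field_simps)
  qed
  have rels: "a = \<epsilon> * p + 1" "B = \<epsilon> * q + 1" "q = p + S * v\<^sup>2" "c\<^sup>2 * D = c\<^sup>2 * a\<^sup>2 - v\<^sup>2"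
    using cD by (auto simp: a_def B_def q_def)
  show "((\<lambda>\<eta>. v/(\<eta> * p+1)) has_real_derivative - ps * vs) (at \<epsilon>)"
    apply (rule DERIV_cong, (rule derivative_eq_intros refl)+)
    using a by (auto simp add: a_def ps_def vs_def field_simps power2_eq_square)
  show "((\<lambda>\<eta>. p/(\<eta> * p+1)) has_real_derivative - ps\<^sup>2) (at \<epsilon>)"
    apply (rule DERIV_cong, (rule derivative_eq_intros refl)+)
    using a by (auto simp add: a_def ps_def field_simps power2_eq_square)
  show "((\<lambda>\<eta>. S * (c\<^sup>2 * (\<eta> * p+1)\<^sup>2 - v\<^sup>2)/((\<eta> * q+1) * (\<eta> * p+1)) - p/(\<eta> * p+1)) has_real_derivative
           (c\<^sup>2 * ps\<^sup>2 - vs\<^sup>2 * es\<^sup>2) / (c\<^sup>2 - vs\<^sup>2)) (at \<epsilon>)"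
    apply (rule DERIV_cong, (rule derivative_eq_intros refl | rule nz1 nz2)+)
    unfolding cvs es2 unfolding ps_def vs_def
    apply (simp only: a_def[symmetric] B_def[symmetric])
    using a B Dp c
    apply (simp add: field_simps)
    using rels by algebra
  have hD: "((\<lambda>\<eta>. (\<eta> * p+1)\<^sup>2 - v\<^sup>2/c\<^sup>2) has_real_derivative 2*(\<epsilon> * p+1)*p) (at \<epsilon>)"
    by (auto intro!: derivative_eq_intros)
  have hs: "((\<lambda>\<eta>. sqrt ((\<eta> * p+1)\<^sup>2 - v\<^sup>2/c\<^sup>2)) has_real_derivative inverse (sqrt D) / 2 * (2*(\<epsilon> * p+1)*p)) (at \<epsilon>)"
    using DERIV_chain2[OF DERIV_real_sqrt hD] Dp by (simp add: D_def)
  have sDp: "sqrt D > 0" using Dp by simp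
  have rels2: "sqrt D * sqrt D = D" using Dp by simp
  show "((\<lambda>\<eta>. r * sqrt ((\<eta> * p + 1)\<^sup>2 - v\<^sup>2 / c\<^sup>2)
        / ((\<eta> * q + 1) * K)) has_real_derivative - rs * vs\<^sup>2 * es/(c\<^sup>2 - vs\<^sup>2)) (at \<epsilon>)"
    apply (rule DERIV_cong, (rule hs derivative_eq_intros refl)+)
    using nz1 Kpos apply simp
    unfolding cvs es2 unfolding rs_def ps_def vs_def
    apply (simp only: D_def[symmetric])
    apply (simp only: a_def[symmetric] B_def[symmetric])
    using a B Dp c Kpos sDp
    apply (simp add: field_simps)
    using rels rels2 by algebra
  show "((\<lambda>\<eta>. - \<eta> * (S * v * dx - q * dt) + dt) has_real_derivative
           (ps + (es + ps) / (c\<^sup>2 - vs\<^sup>2) * vs\<^sup>2) * dts - (es + ps) / (c\<^sup>2 - vs\<^sup>2) * vs * dx) (at \<epsilon>)"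
    apply (rule DERIV_cong, (rule derivative_eq_intros refl)+)
    unfolding Ss unfolding ps_def vs_def dts_def
    using a B
    apply (simp add: field_simps)
    using rels by algebra
qed

lemma comp:
  fixes c r v p e dt dx \<epsilon>1 \<epsilon>2 :: real
  defines "S \<equiv> Sfun c v p e"
  defines "q \<equiv> p + S * v\<^sup>2"
  defines "a2 \<equiv> \<epsilon>2 * p + 1" and "B2 \<equiv> \<epsilon>2 * q + 1"
  defines "att \<equiv> (\<epsilon>1 + \<epsilon>2) * p + 1" and "Bt \<equiv> (\<epsilon>1 + \<epsilon>2) * q + 1"
  defines "D2 \<equiv> a2\<^sup>2 - v\<^sup>2 / c\<^sup>2" and "Dt \<equiv> att\<^sup>2 - v\<^sup>2 / c\<^sup>2" and "K \<equiv> sqrt (1 - v\<^sup>2 / c\<^sup>2)"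
  defines "v1 \<equiv> v / a2" and "p1 \<equiv> p / a2" and "e1 \<equiv> S * (c\<^sup>2 * a2\<^sup>2 - v\<^sup>2) / (B2 * a2) - p / a2"
    and "r1 \<equiv> r * sqrt D2 / (B2 * K)" and "dt1 \<equiv> - \<epsilon>2 * (S * v * dx - q * dt) + dt"
  assumes c: "c > 0" and vc: "v\<^sup>2 < c\<^sup>2" and a2: "a2 \<noteq> 0" and B2: "B2 \<noteq> 0" and D2: "D2 > 0"
    and att0: "att \<noteq> 0" and Bt: "Bt \<noteq> 0"
  shows "T c \<epsilon>1 (T c \<epsilon>2 (r, v, p, e, dt, dx)) = T c (\<epsilon>1 + \<epsilon>2) (r, v, p, e, dt, dx)"
proof -
  have T2: "T c \<epsilon>2 (r, v, p, e, dt, dx) = (r1, v1, p1, e1, dt1, dx)"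
    unfolding T_eq r1_def v1_def p1_def e1_def dt1_def S_def q_def a2_def B2_def D2_def K_def ..
  have Tt: "T c (\<epsilon>1 + \<epsilon>2) (r, v, p, e, dt, dx) = (r * sqrt Dt / (Bt * K), v / att, p / att,
     S * (c\<^sup>2 * att\<^sup>2 - v\<^sup>2) / (Bt * att) - p / att, - (\<epsilon>1 + \<epsilon>2) * (S * v * dx - q * dt) + dt, dx)"
    unfolding T_eq S_def q_def att_def Bt_def Dt_def K_def ..
  have Kpos: "K > 0" using vc c by (simp add: K_def field_simps)
  have cD: "c\<^sup>2*a2\<^sup>2-v\<^sup>2 = c\<^sup>2 * D2" using c by (simp add: D2_def field_simps)
  have cvs: "c\<^sup>2 - v1\<^sup>2 = c\<^sup>2 * D2 / a2\<^sup>2" using a2 c unfolding v1_def D2_def by (simp add: field_simps)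
  have esps: "e1 + p1 = S * c\<^sup>2 * D2 / (B2*a2)" unfolding e1_def p1_def cD by simp
  have S1: "Sfun c v1 p1 e1 = S * a2 / B2"
    unfolding Sfun_def esps cvs using a2 B2 c D2 by (simp add: field_simps power2_eq_square)
  have ha: "\<epsilon>1 * p1 + 1 = att / a2" using a2 unfolding p1_def att_def a2_def by (simp add: field_simps)
  have hq: "p1 + S * a2 / B2 * v1\<^sup>2 = q / B2"
    using a2 B2 unfolding p1_def v1_def
    apply (simp add: field_simps)
    unfolding B2_def a2_def q_def by (simp add: algebra_simps power2_eq_square)
  have hB: "\<epsilon>1 * (p1 + S * a2 / B2 * v1\<^sup>2) + 1 = Bt / B2"
    unfolding hq using B2 unfolding Bt_def B2_def by (simp add: field_simps)
  have hD: "(att / a2)\<^sup>2 - v1\<^sup>2 / c\<^sup>2 = Dt / a2\<^sup>2" using a2 c unfolding v1_def Dt_def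
    by (simp add: field_simps)
  have hK: "sqrt (1 - v1\<^sup>2 / c\<^sup>2) = sqrt D2 / \<bar>a2\<bar>"
  proof -
    have "1 - v1\<^sup>2 / c\<^sup>2 = D2 / a2\<^sup>2" using a2 c unfolding v1_def D2_def by (simp add: field_simps)
    then show ?thesis by (simp add: real_sqrt_divide)
  qed
  have hsD: "sqrt (Dt / a2\<^sup>2) = sqrt Dt / \<bar>a2\<bar>" by (simp add: real_sqrt_divide)
  show ?thesis
    unfolding T2 Tt unfolding T_eq S1 ha hB hD hK hsD unfolding hq prod.inject
  proof (intro conjI)
    have "sqrt D2 > 0" "\<bar>a2\<bar> > 0" using D2 a2 by auto
    then show "r1 * (sqrt Dt / \<bar>a2\<bar>) / (Bt / B2 * (sqrt D2 / \<bar>a2\<bar>)) = r * sqrt Dt / (Bt * K)"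
      unfolding r1_def using B2 Bt Kpos by (simp add: field_simps)
    show "v1 / (att / a2) = v / att" "p1 / (att / a2) = p / att"
      unfolding v1_def p1_def using a2 att0 by (auto simp: field_simps)
    show "S * a2 / B2 * (c\<^sup>2 * (att / a2)\<^sup>2 - v1\<^sup>2) / (Bt / B2 * (att / a2)) -
     p1 / (att / a2) = S * (c\<^sup>2 * att\<^sup>2 - v\<^sup>2) / (Bt * att) - p / att"
      unfolding v1_def p1_def using a2 att0 B2 Bt by (simp add: field_simps power2_eq_square)
    have rels: "B2 = \<epsilon>2 * q + 1" "Bt = (\<epsilon>1 + \<epsilon>2) * q + 1" by (simp_all add: B2_def Bt_def)
    show "- \<epsilon>1 * (S * a2 / B2 * v1 * dx - q / B2 * dt1) + dt1 = - (\<epsilon>1 + \<epsilon>2) * (S * v * dx - q * dt) + dt"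
      unfolding v1_def dt1_def using a2 B2 apply (simp add: field_simps)
      using rels by algebra
  qed simp
qed

lemma deriv_T:
  fixes c r v p e dt dx \<epsilon> :: real
  assumes c: "c > 0" and vc: "\<bar>v\<bar> < c" and Td: "T_defined c \<epsilon> (r, v, p, e, dt, dx)"
  shows "((\<lambda>\<eta>. T c \<eta> (r, v, p, e, dt, dx)) has_vector_derivative ode_rhs c (T c \<epsilon> (r, v, p, e, dt, dx))) (at \<epsilon>)"
proof -
  define S where "S = Sfun c v p e"
  have vc2: "v\<^sup>2 < c\<^sup>2" using power_strict_mono[OF vc abs_ge_zero, of 2] by simp
  have a: "\<epsilon> * p + 1 \<noteq> 0" and B: "\<epsilon> * (p + S * v\<^sup>2) + 1 \<noteq> 0" and D: "(\<epsilon> * p + 1)\<^sup>2 - v\<^sup>2 / c\<^sup>2 > 0"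
    using Td unfolding T_defined_def S_def by auto
  note comps = deriv_comps[OF c vc2 B a D]
  show ?thesis
    apply (rule has_vector_derivative_eq_rhs)
     apply (unfold T_eq S_def[symmetric])
     apply (rule has_vector_derivative_Pair)
     apply (rule has_real_derivative_iff_has_vector_derivative[THEN iffD1])
     apply (rule comps)
     apply (rule has_vector_derivative_Pair)
     apply (rule has_real_derivative_iff_has_vector_derivative[THEN iffD1])
     apply (rule comps)
     apply (rule has_vector_derivative_Pair)
     apply (rule has_real_derivative_iff_has_vector_derivative[THEN iffD1])
     apply (rule comps)
     apply (rule has_vector_derivative_Pair)
     apply (rule has_real_derivative_iff_has_vector_derivative[THEN iffD1])
     apply (rule comps)
     apply (rule has_vector_derivative_Pair)
     apply (rule has_real_derivative_iff_has_vector_derivative[THEN iffD1])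
     apply (rule comps)
     apply (rule has_vector_derivative_const)
    unfolding ode_rhs_def Let_def prod.case
    by simp
qed

lemma main_comp:
  fixes c :: real and x :: state
  assumes c: "c > 0" and adm: "admissible c x" and T2: "T_defined c \<epsilon>2 x" and Tt: "T_defined c (\<epsilon>1 + \<epsilon>2) x"
  shows "T c \<epsilon>1 (T c \<epsilon>2 x) = T c (\<epsilon>1 + \<epsilon>2) x"
proof -
  obtain r v p e dt dx where x: "x = (r, v, p, e, dt, dx)" using prod_cases6 by metis
  have vc: "\<bar>v\<bar> < c" using adm x by (simp add: admissible_def)
  have vc2: "v\<^sup>2 < c\<^sup>2" using power_strict_mono[OF vc abs_ge_zero, of 2] by simp
  show ?thesis unfolding x
    apply (rule comp)
    using c vc2 T2 Tt unfolding x T_defined_def by auto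
qed

lemma main_id:
  fixes c :: real and x :: state
  assumes c: "c > 0" and adm: "admissible c x"
  shows "T c 0 x = x"
proof -
  obtain r v p e dt dx where x: "x = (r, v, p, e, dt, dx)" using prod_cases6 by metis
  have vc: "\<bar>v\<bar> < c" using adm x by (simp add: admissible_def)
  have vc2: "v\<^sup>2 < c\<^sup>2" using power_strict_mono[OF vc abs_ge_zero, of 2] by simp
  have k: "sqrt (1 - v\<^sup>2 / c\<^sup>2) \<noteq> 0" using vc2 c by (simp add: field_simps)
  have cv: "c\<^sup>2 - v\<^sup>2 \<noteq> 0" using vc2 by simp
  show ?thesis unfolding x T_eq Sfun_def using k cv by simp
qed

lemma main_def0:
  fixes c :: real and x :: state
  assumes c: "c > 0" and adm: "admissible c x"
  shows "T_defined c 0 x"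
proof -
  obtain r v p e dt dx where x: "x = (r, v, p, e, dt, dx)" using prod_cases6 by metis
  have vc: "\<bar>v\<bar> < c" using adm x by (simp add: admissible_def)
  have vc2: "v\<^sup>2 < c\<^sup>2" using power_strict_mono[OF vc abs_ge_zero, of 2] by simp
  show ?thesis unfolding x T_defined_def using vc2 c by (simp add: field_simps)
qed

lemma main_gen:
  fixes c :: real and x :: state
  assumes c: "c > 0" and adm: "admissible c x"
  shows "ode_rhs c x = generator c x"
proof -
  obtain r v p e dt dx where x: "x = (r, v, p, e, dt, dx)" using prod_cases6 by metis
  have vc: "\<bar>v\<bar> < c" using adm x by (simp add: admissible_def)
  have vc2: "v\<^sup>2 < c\<^sup>2" using power_strict_mono[OF vc abs_ge_zero, of 2] by simp
  have cv: "c\<^sup>2 - v\<^sup>2 \<noteq> 0" using vc2 by simp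
  have dtc: "(p + (e + p) / (c\<^sup>2 - v\<^sup>2) * v\<^sup>2) * dt - (e + p) / (c\<^sup>2 - v\<^sup>2) * v * dx
     = ((c\<^sup>2 * p + e * v\<^sup>2) * dt - v * (e + p) * dx) / (c\<^sup>2 - v\<^sup>2)"
  proof -
    define d where "d = c\<^sup>2 - v\<^sup>2"
    have "d \<noteq> 0" using cv d_def by simp
    then have "(p + (e + p) / d * v\<^sup>2) * dt - (e + p) / d * v * dx
      = ((d * p + (e + p) * v\<^sup>2) * dt - (e + p) * v * dx) / d" by (simp add: field_simps)
    also have "\<dots> = ((c\<^sup>2 * p + e * v\<^sup>2) * dt - v * (e + p) * dx) / d"
      unfolding d_def by (simp add: algebra_simps)
    finally show ?thesis unfolding d_def .
  qed
  show ?thesis unfolding x ode_rhs_def generator_def Let_def prod.case dtc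
    by (simp add: mult.commute)
qed

theorem mainTheorem1:
  fixes c :: real
  assumes "c > 0"
  shows "(\<forall>x. admissible c x \<longrightarrow> T c 0 x = x)
    \<and> (\<forall>x \<epsilon>1 \<epsilon>2. admissible c x \<and> T_defined c \<epsilon>2 x \<and> T_defined c \<epsilon>1 (T c \<epsilon>2 x)
          \<and> T_defined c (\<epsilon>1 + \<epsilon>2) x
          \<longrightarrow> T c \<epsilon>1 (T c \<epsilon>2 x) = T c (\<epsilon>1 + \<epsilon>2) x)
    \<and> (\<forall>x \<epsilon>. admissible c x \<and> T_defined c \<epsilon> x
          \<longrightarrow> ((\<lambda>\<eta>. T c \<eta> x) has_vector_derivative ode_rhs c (T c \<epsilon> x)) (at \<epsilon>))
    \<and> (\<forall>x. admissible c x
          \<longrightarrow> ((\<lambda>\<eta>. T c \<eta> x) has_vector_derivative generator c x) (at 0))"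
proof (intro conjI allI impI)
  fix x assume "admissible c x"
  then show "T c 0 x = x" using main_id assms by blast
next
  fix x \<epsilon>1 \<epsilon>2
  assume h: "admissible c x \<and> T_defined c \<epsilon>2 x \<and> T_defined c \<epsilon>1 (T c \<epsilon>2 x) \<and> T_defined c (\<epsilon>1 + \<epsilon>2) x"
  then show "T c \<epsilon>1 (T c \<epsilon>2 x) = T c (\<epsilon>1 + \<epsilon>2) x" using main_comp assms by blast
next
  fix x \<epsilon> assume h: "admissible c x \<and> T_defined c \<epsilon> x"
  obtain r v p e dt dx where x: "x = (r, v, p, e, dt, dx)" using prod_cases6 by metis
  have vc: "\<bar>v\<bar> < c" using h x by (simp add: admissible_def)
  show "((\<lambda>\<eta>. T c \<eta> x) has_vector_derivative ode_rhs c (T c \<epsilon> x)) (at \<epsilon>)"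
    unfolding x using deriv_T assms vc h x by blast
next
  fix x assume h: "admissible c x"
  obtain r v p e dt dx where x: "x = (r, v, p, e, dt, dx)" using prod_cases6 by metis
  have vc: "\<bar>v\<bar> < c" using h x by (simp add: admissible_def)
  have "((\<lambda>\<eta>. T c \<eta> x) has_vector_derivative ode_rhs c (T c 0 x)) (at 0)"
    unfolding x using deriv_T assms vc main_def0[OF assms h] x by blast
  then show "((\<lambda>\<eta>. T c \<eta> x) has_vector_derivative generator c x) (at 0)"
    using main_id[OF assms h] main_gen[OF assms h] by simp
qed

end
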